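(* For every knot diagram $D$ and every Dehn $p$-coloring $C$ of $D$, $\partial_2^{\rm SLB}(W(D,C))=0$ in $C_1^{\rm SLB}(\mathbb Z_p)$.
   Context: Let $p$ be an odd prime, $X=\mathbb Z_p$, $[a,b,c]=a-b+c$, $\rho((a,b))=(b,a)$, $(a,b)\,\underline{\star}\,(a,c)=(c,[a,b,c])$, $(a,b)\,\overline{\star}\,(a,c)=(c,[a,c,b])$. For $n\ge1$ let $C_n^{\rm lb}(X)$ be the free abelian group on tuples $((a,b_1),\dots,(a,b_n))$, $a,b_i\in X$ (zero for $n\le 0$), with $\partial_n^{\rm lb}$ for $n\ge 2$ given by $\sum_{i=1}^n(-1)^i\{((a,b_1),\dots,\widehat{(a,b_i)},\dots,(a,b_n))-((b_i,[a,b_1,b_i]),\dots,(b_i,[a,b_{i-1},b_i]),(b_i,[a,b_i,b_{i+1}]),\dots,(b_i,[a,b_i,b_n]))\}$ and $\partial_n^{\rm lb}=0$ for $n\le1$; in particular $\partial_2^{\rm lb}((a,b),(a,c))=-(a,c)+(a,b)+(b,[a,b,c])-(c,[a,b,c])$. Let $D_n^{\rm lb}(X)$ be generated by tuples with $b_i=b_{i+1}$ for some $i$, $D_n^{\rm lb}(X,\rho)$ generated by all $((a,b_1),\dots,(a,b_n))+((a,b_1)\underline\star(a,b_i),\dots,(a,b_{i-1})\underline\star(a,b_i),\rho((a,b_i)),(a,b_{i+1})\overline\star(a,b_i),\dots,(a,b_n)\overline\star(a,b_i))$; $C_n^{\rm SLB}(X)=C_n^{\rm lb}(X)/(D_n^{\rm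 lb}(X)+D_n^{\rm lb}(X,\rho))$ with induced boundary $\partial_n^{\rm SLB}$. Dehn $p$-colorings: for a knot diagram $D$ with region set $\mathcal R(D)$, at each crossing label the four regions $x_1,x_2,x_3,x_4$ so that $x_2$ is adjacent to $x_1$ across an under-arc, $x_3$ adjacent to $x_1$ across the over-arc, $x_4$ opposite $x_1$; a Dehn $p$-coloring is $C:\mathcal R(D)\to\mathbb Z_p$ with $C(x_1)+C(x_3)=C(x_2)+C(x_4)$ at every crossing. At each crossing $\chi$ choose a specified region $x_1$, put $a=C(x_1),b=C(x_2),c=C(x_3)$ and $w_\chi=\varepsilon((a,b),(a,c))\in C_2^{\rm SLB}(X)$, with $\varepsilon=+1$ if $(n_o,n_u)$ is a positively oriented basis of $\mathbb R^2$ and $-1$ otherwise ($n_u$ the normal vector from $x_1$ to $x_2$, $n_o$ from $x_1$ to $x_3$). $W(D,C)=\sum_\chi w_\chi\in C_2^{\rm SLB}(X)$; it is independent of the choices of specified regions. *)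

theory Defs
  imports Main "HOL-Library.Function_Algebras" "HOL-Computational_Algebra.Primes"
begin

text \<open>Elements of X = Z_p are represented by integers in {0..<p}; the ternary
operation [a,b,c] = a - b + c is computed modulo p.  A generator of C_n^lb is a
list ((a,b_1),...,(a,b_n)) of pairs with common first entry.  Chains are
finitely supported integer-valued functions on such lists (free abelian group).\<close>

type_synonym lb_chain = "(int \<times> int) list \<Rightarrow> int"

definition tern :: "int \<Rightarrow> int \<Rightarrow> int \<Rightarrow> int \<Rightarrow> int" where
  "tern p a b c = (a - b + c) mod p"

definition lb_tuple :: "int \<Rightarrow> nat \<Rightarrow> (int \<times> int) list \<Rightarrow> bool" where
  "lb_tuple p n t \<longleftrightarrow> n \<ge> 1 \<and> length t = n \<and>
     (\<forall>x\<in>set t. fst x \<in> {0..<p} \<and> snd x \<in> {0..<p} \<and> fst x = fst (hd t))"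

definition is_lb_chain :: "int \<Rightarrow> nat \<Rightarrow> lb_chain \<Rightarrow> bool" where
  "is_lb_chain p n c \<longleftrightarrow> finite {t. c t \<noteq> 0} \<and> (\<forall>t. c t \<noteq> 0 \<longrightarrow> lb_tuple p n t)"

definition gen :: "(int \<times> int) list \<Rightarrow> lb_chain" where
  "gen t = (\<lambda>s. if s = t then 1 else 0)"

definition ustar :: "int \<Rightarrow> int \<times> int \<Rightarrow> int \<times> int \<Rightarrow> int \<times> int" where
  "ustar p x y = (snd y, tern p (fst x) (snd x) (snd y))"

definition ostar :: "int \<Rightarrow> int \<times> int \<Rightarrow> int \<times> int \<Rightarrow> int \<times> int" where
  "ostar p x y = (snd y, tern p (fst x) (snd y) (snd x))"

definition rho :: "int \<times> int \<Rightarrow> int \<times> int" where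
  "rho x = (snd x, fst x)"

text \<open>Deleting the i-th entry (0-based) and the "moved" tuple at position i (0-based):
((a,b_j) ustar (a,b_i))_{j<i}, ((a,b_j) ostar (a,b_i))_{j>i}.\<close>
definition del_at :: "nat \<Rightarrow> 'a list \<Rightarrow> 'a list" where
  "del_at i t = take i t @ drop (Suc i) t"

definition face_at :: "int \<Rightarrow> nat \<Rightarrow> (int \<times> int) list \<Rightarrow> (int \<times> int) list" where
  "face_at p i t = map (\<lambda>x. ustar p x (t ! i)) (take i t) @
                   map (\<lambda>x. ostar p x (t ! i)) (drop (Suc i) t)"

text \<open>Boundary of a generator; index i (1-based in the paper) is i+1 here.\<close>
definition bd_gen :: "int \<Rightarrow> (int \<times> int) list \<Rightarrow> lb_chain" where
  "bd_gen p t = (if length t \<le> 1 then 0 else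
     (\<Sum>i<length t. (- 1) ^ (Suc i) * (gen (del_at i t) - gen (face_at p i t))))"

definition bd_lb :: "int \<Rightarrow> nat \<Rightarrow> lb_chain \<Rightarrow> lb_chain" where
  "bd_lb p n c = (if n \<le> 1 then 0 else (\<Sum>t\<in>{t. c t \<noteq> 0}. (\<lambda>_. c t) * bd_gen p t))"

definition D_gens :: "int \<Rightarrow> nat \<Rightarrow> lb_chain set" where
  "D_gens p n = {gen t | t. lb_tuple p n t \<and> (\<exists>i. Suc i < n \<and> snd (t ! i) = snd (t ! Suc i))}"

definition rho_move :: "int \<Rightarrow> nat \<Rightarrow> (int \<times> int) list \<Rightarrow> (int \<times> int) list" where
  "rho_move p i t = map (\<lambda>x. ustar p x (t ! i)) (take i t) @ [rho (t ! i)] @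
                    map (\<lambda>x. ostar p x (t ! i)) (drop (Suc i) t)"

definition Drho_gens :: "int \<Rightarrow> nat \<Rightarrow> lb_chain set" where
  "Drho_gens p n = {gen t + gen (rho_move p i t) | t i. lb_tuple p n t \<and> i < n}"

inductive_set zspan :: "lb_chain set \<Rightarrow> lb_chain set" for S where
  zero: "0 \<in> zspan S"
| add: "x \<in> zspan S \<Longrightarrow> g \<in> S \<Longrightarrow> x + g \<in> zspan S"
| sub: "x \<in> zspan S \<Longrightarrow> g \<in> S \<Longrightarrow> x - g \<in> zspan S"

text \<open>The submodule D_n^lb(X) + D_n^lb(X,rho); C_n^SLB = C_n^lb / this.
A class [c] in C_n^SLB is zero iff c lies in this subgroup.\<close>
definition D_SLB :: "int \<Rightarrow> nat \<Rightarrow> lb_chain set" where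
  "D_SLB p n = zspan (D_gens p n \<union> Drho_gens p n)"

text \<open>A diagram with crossing set V is encoded by a rotation system: each crossing c
has four half-edges (darts) (c,0),(c,1),(c,2),(c,3) in counterclockwise order,
where (c,0),(c,2) belong to the under-arc and (c,1),(c,3) to the over-arc.  The
fixed-point-free involution alpha pairs the two ends of each edge (semi-arc).
The corner (c,k) is the corner between darts (c,k) and (c,(k+1) mod 4).\<close>

definition darts :: "'v set \<Rightarrow> ('v \<times> nat) set" where
  "darts V = V \<times> {0..<4}"

definition rot :: "'v \<times> nat \<Rightarrow> 'v \<times> nat" where
  "rot d = (fst d, (snd d + 1) mod 4)"

definition face_perm :: "(('v \<times> nat) \<Rightarrow> ('v \<times> nat)) \<Rightarrow> 'v \<times> nat \<Rightarrow> 'v \<times> nat" where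
  "face_perm \<alpha> d = \<alpha> (rot d)"

definition region_of :: "(('v \<times> nat) \<Rightarrow> ('v \<times> nat)) \<Rightarrow> 'v \<times> nat \<Rightarrow> ('v \<times> nat) set" where
  "region_of \<alpha> d = {(face_perm \<alpha> ^^ n) d | n. True}"

definition regions :: "'v set \<Rightarrow> (('v \<times> nat) \<Rightarrow> ('v \<times> nat)) \<Rightarrow> ('v \<times> nat) set set" where
  "regions V \<alpha> = region_of \<alpha> ` darts V"

text \<open>Strand relation: going straight through a crossing, or along an edge.\<close>
definition strand_rel :: "'v set \<Rightarrow> (('v \<times> nat) \<Rightarrow> ('v \<times> nat)) \<Rightarrow> (('v \<times> nat) \<times> ('v \<times> nat)) set" where
  "strand_rel V \<alpha> = {(d, \<alpha> d) | d. d \<in> darts V} \<union> {(d, rot (rot d)) | d. d \<in> darts V}"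

text \<open>A knot diagram: finitely many crossings, well-formed edge pairing, and (if there
is at least one crossing) exactly one component and genus 0 (V - E + F = 2 with
E = 2V), i.e. the diagram lives on the sphere / plane.  The empty crossing set
represents the crossingless diagram (a circle).\<close>
definition knot_diagram :: "'v set \<Rightarrow> (('v \<times> nat) \<Rightarrow> ('v \<times> nat)) \<Rightarrow> bool" where
  "knot_diagram V \<alpha> \<longleftrightarrow> finite V \<and>
     (\<forall>d\<in>darts V. \<alpha> d \<in> darts V \<and> \<alpha> d \<noteq> d \<and> \<alpha> (\<alpha> d) = d) \<and>
     (V \<noteq> {} \<longrightarrow> (\<forall>d\<in>darts V. \<forall>d'\<in>darts V. (d, d') \<in> (strand_rel V \<alpha>)\<^sup>*) \<and>
                  card (regions V \<alpha>) = card V + 2)"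

text \<open>Dehn p-coloring: C : regions -> Z_p with C(x1)+C(x3) = C(x2)+C(x4) at each crossing.
With x1 the corner (c,0), x2 = corner (c,3) (across the under-dart (c,0)),
x3 = corner (c,1) (across the over-dart (c,1)), x4 = corner (c,2).\<close>
definition corner_col :: "(('v \<times> nat) \<Rightarrow> ('v \<times> nat)) \<Rightarrow> (('v \<times> nat) set \<Rightarrow> int) \<Rightarrow> 'v \<Rightarrow> nat \<Rightarrow> int" where
  "corner_col \<alpha> C c k = C (region_of \<alpha> (c, k mod 4))"

definition dehn_coloring :: "int \<Rightarrow> 'v set \<Rightarrow> (('v \<times> nat) \<Rightarrow> ('v \<times> nat)) \<Rightarrow> (('v \<times> nat) set \<Rightarrow> int) \<Rightarrow> bool" where
  "dehn_coloring p V \<alpha> C \<longleftrightarrow> (\<forall>R\<in>regions V \<alpha>. C R \<in> {0..<p}) \<and>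
     (\<forall>c\<in>V. (corner_col \<alpha> C c 0 + corner_col \<alpha> C c 1) mod p =
             (corner_col \<alpha> C c 3 + corner_col \<alpha> C c 2) mod p)"

text \<open>Weight at crossing c with specified region the corner (c,k), k<4.
If k is even, dart (c,k) is under and (c,k+1) over: x2 = corner k-1, x3 = corner k+1,
and (n_o,n_u) is positively oriented, so epsilon = +1.
If k is odd, dart (c,k) is over and (c,k+1) under: x2 = corner k+1, x3 = corner k-1,
and epsilon = -1.\<close>
definition crossing_weight :: "(('v \<times> nat) \<Rightarrow> ('v \<times> nat)) \<Rightarrow> (('v \<times> nat) set \<Rightarrow> int) \<Rightarrow> 'v \<Rightarrow> nat \<Rightarrow> lb_chain" where
  "crossing_weight \<alpha> C c k =
     (let a = corner_col \<alpha> C c k;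
          l = corner_col \<alpha> C c (k + 3);
          r = corner_col \<alpha> C c (k + 1)
      in if even k then gen [(a, l), (a, r)] else - gen [(a, r), (a, l)])"

text \<open>W(D,C) (a representative in C_2^lb of the class in C_2^SLB), for an arbitrary
choice sel of specified regions.\<close>
definition W :: "'v set \<Rightarrow> (('v \<times> nat) \<Rightarrow> ('v \<times> nat)) \<Rightarrow> (('v \<times> nat) set \<Rightarrow> int) \<Rightarrow> ('v \<Rightarrow> nat) \<Rightarrow> lb_chain" where
  "W V \<alpha> C sel = (\<Sum>c\<in>V. crossing_weight \<alpha> C c (sel c))"

end

theory Submission
  imports Defs
begin


lemma zspan_plus: assumes y: "y \<in> zspan S" and x: "x \<in> zspan S" shows "x + y \<in> zspan S"
  using y
proof (rule zspan.induct)
  show "x + 0 \<in> zspan S" using x by (subst add.right_neutral)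
next
  fix y g assume a: "y \<in> zspan S" "x + y \<in> zspan S" "g \<in> S"
  have "(x + y) + g \<in> zspan S" by (rule zspan.add[OF a(2) a(3)])
  then show "x + (y + g) \<in> zspan S" by (subst add.assoc[symmetric])
next
  fix y g assume a: "y \<in> zspan S" "x + y \<in> zspan S" "g \<in> S"
  have "(x + y) - g \<in> zspan S" by (rule zspan.sub[OF a(2) a(3)])
  then show "x + (y - g) \<in> zspan S" by (subst add_diff_eq)
qed

lemma zspan_neg: assumes x: "x \<in> zspan S" shows "- x \<in> zspan S"
  using x
proof (rule zspan.induct)
  show "- 0 \<in> zspan S" by (subst minus_zero) (rule zspan.zero)
next
  fix y g assume a: "y \<in> zspan S" "- y \<in> zspan S" "g \<in> S"
  have "(- y) - g \<in> zspan S" by (rule zspan.sub[OF a(2) a(3)])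
  then show "- (y + g) \<in> zspan S" by (subst minus_add_distrib) (subst diff_conv_add_uminus[symmetric])
next
  fix y g assume a: "y \<in> zspan S" "- y \<in> zspan S" "g \<in> S"
  have "(- y) + g \<in> zspan S" by (rule zspan.add[OF a(2) a(3)])
  then show "- (y - g) \<in> zspan S" by (subst minus_diff_eq) (subst diff_conv_add_uminus, subst add.commute)
qed

lemma zspan_diff: "x \<in> zspan S \<Longrightarrow> y \<in> zspan S \<Longrightarrow> x - y \<in> zspan S"
  by (subst diff_conv_add_uminus) (rule zspan_plus[OF zspan_neg])

lemma zspan_sum: "finite A \<Longrightarrow> (\<And>a. a \<in> A \<Longrightarrow> f a \<in> zspan S) \<Longrightarrow> sum f A \<in> zspan S"
proof (induction A rule: finite_induct)
  case empty then show ?case by (subst sum.empty) (rule zspan.zero)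
next
  case (insert a F)
  have "f a + sum f F \<in> zspan S" by (rule zspan_plus) (use insert in auto)
  then show ?case by (subst sum.insert[OF insert.hyps])
qed

lemma pairD: "0 \<le> x \<Longrightarrow> x < p \<Longrightarrow> 0 \<le> y \<Longrightarrow> y < p \<Longrightarrow>
   gen [(x,y)] + gen [(y,x)] \<in> D_SLB p 1"
proof -
  assume a: "0 \<le> x" "x < p" "0 \<le> y" "y < p"
  have lt: "lb_tuple p 1 [(x,y)]" using a by (simp add: lb_tuple_def)
  have rm: "rho_move p 0 [(x,y)] = [(y,x)]" by (simp add: rho_move_def rho_def)
  have "gen [(x,y)] + gen (rho_move p 0 [(x,y)]) \<in> Drho_gens p 1"
    unfolding Drho_gens_def using lt by blast
  then have m: "gen [(x,y)] + gen [(y,x)] \<in> D_gens p 1 \<union> Drho_gens p 1" by (simp only: rm UnI2)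
  have "0 + (gen [(x,y)] + gen [(y,x)]) \<in> zspan (D_gens p 1 \<union> Drho_gens p 1)"
    by (rule zspan.add[OF zspan.zero m])
  then show ?thesis unfolding D_SLB_def by (subst (asm) add_0_left)
qed

lemma pair_sum:
  assumes "finite A" "\<forall>d\<in>A. \<sigma> d \<in> A \<and> \<sigma> d \<noteq> d \<and> \<sigma> (\<sigma> d) = d"
    "\<forall>d\<in>A. g d + g (\<sigma> d) \<in> zspan S"
  shows "sum g A \<in> zspan S"
  using assms
proof (induction "card A" arbitrary: A rule: less_induct)
  case less
  show ?case
  proof (cases "A = {}")
    case True then show ?thesis by (simp only: sum.empty zspan.zero)
  next
    case False
    then obtain d where d: "d \<in> A" by auto
    let ?B = "A - {d, \<sigma> d}"
    have sd: "\<sigma> d \<in> A" "\<sigma> d \<noteq> d" "\<sigma> (\<sigma> d) = d" using less.prems(2) d by auto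
    have sub: "{d, \<sigma> d} \<subseteq> A" using d sd by auto
    have cB: "card ?B < card A" using d sd less.prems(1) by (intro psubset_card_mono) auto
    have "sum g ?B \<in> zspan S"
    proof (rule less.hyps[OF cB])
      show "finite ?B" using less.prems(1) by simp
      show "\<forall>d\<in>?B. \<sigma> d \<in> ?B \<and> \<sigma> d \<noteq> d \<and> \<sigma> (\<sigma> d) = d"
      proof
        fix e assume e: "e \<in> ?B"
        then have eA: "e \<in> A" "e \<noteq> d" "e \<noteq> \<sigma> d" by auto
        have se: "\<sigma> e \<in> A" "\<sigma> e \<noteq> e" "\<sigma> (\<sigma> e) = e" using less.prems(2) eA(1) by auto
        have n1: "\<sigma> e \<noteq> d"
        proof
          assume "\<sigma> e = d" then have "\<sigma> d = e" using se(3) by simp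
          then show False using eA(3) by simp
        qed
        have n2: "\<sigma> e \<noteq> \<sigma> d"
        proof
          assume "\<sigma> e = \<sigma> d" then have "\<sigma> (\<sigma> e) = \<sigma> (\<sigma> d)" by simp
          then show False using se(3) sd(3) eA(2) by simp
        qed
        show "\<sigma> e \<in> ?B \<and> \<sigma> e \<noteq> e \<and> \<sigma> (\<sigma> e) = e"
          using se n1 n2 by blast
      qed
      show "\<forall>d\<in>?B. g d + g (\<sigma> d) \<in> zspan S" using less.prems(3) by blast
    qed
    moreover have "sum g A = sum g ?B + (g d + g (\<sigma> d))"
    proof -
      have "sum g A = sum g (A - {d, \<sigma> d}) + sum g {d, \<sigma> d}"
        by (rule sum.subset_diff[OF sub less.prems(1)])
      moreover have "sum g {d, \<sigma> d} = g d + g (\<sigma> d)"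
        using sd(2) by (subst sum.insert) auto
      ultimately show ?thesis by simp
    qed
    moreover have "g d + g (\<sigma> d) \<in> zspan S" using less.prems(3) d by blast
    ultimately show ?thesis using zspan_plus by metis
  qed
qed

section \<open>Boundary linearity\<close>

definition fs :: "lb_chain \<Rightarrow> bool" where "fs c \<longleftrightarrow> finite {t. c t \<noteq> 0}"

lemma fs_gen: "fs (gen t)" unfolding fs_def gen_def by auto
lemma fs_add: "fs a \<Longrightarrow> fs b \<Longrightarrow> fs (a + b)"
  unfolding fs_def by (rule finite_subset[of _ "{t. a t \<noteq> 0} \<union> {t. b t \<noteq> 0}"]) auto
lemma fs_neg: "fs a \<Longrightarrow> fs (- a)" unfolding fs_def by simp
lemma fs_sum: "finite A \<Longrightarrow> (\<And>x. x \<in> A \<Longrightarrow> fs (f x)) \<Longrightarrow> fs (sum f A)"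
  by (induction A rule: finite_induct) (auto simp: fs_add, simp add: fs_def)

lemma bd_eq:
  assumes "finite S" "{t. c t \<noteq> 0} \<subseteq> S"
  shows "bd_lb p 2 c = (\<Sum>t\<in>S. (\<lambda>_. c t) * bd_gen p t)"
  unfolding bd_lb_def
  apply simp
  apply (rule sum.mono_neutral_left[OF assms])
  by (auto simp: zero_fun_def[symmetric])

lemma bd_add: "fs a \<Longrightarrow> fs b \<Longrightarrow> bd_lb p 2 (a + b) = bd_lb p 2 a + bd_lb p 2 b"
proof -
  assume a: "fs a" "fs b"
  let ?S = "{t. a t \<noteq> 0} \<union> {t. b t \<noteq> 0}"
  have f: "finite ?S" using a by (simp add: fs_def)
  have "bd_lb p 2 (a + b) = (\<Sum>t\<in>?S. (\<lambda>_. (a+b) t) * bd_gen p t)"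
    by (rule bd_eq[OF f]) auto
  also have "\<dots> = (\<Sum>t\<in>?S. (\<lambda>_. a t) * bd_gen p t + (\<lambda>_. b t) * bd_gen p t)"
    by (rule sum.cong) (auto simp: fun_eq_iff algebra_simps)
  also have "\<dots> = bd_lb p 2 a + bd_lb p 2 b"
    by (simp add: sum.distrib bd_eq[OF f])
  finally show ?thesis .
qed

lemma bd_neg: "fs a \<Longrightarrow> bd_lb p 2 (- a) = - bd_lb p 2 a"
proof -
  assume a: "fs a"
  let ?S = "{t. a t \<noteq> 0}"
  have f: "finite ?S" using a by (simp add: fs_def)
  have "bd_lb p 2 (- a) = (\<Sum>t\<in>?S. (\<lambda>_. (-a) t) * bd_gen p t)"
    by (rule bd_eq[OF f]) auto
  also have "\<dots> = (\<Sum>t\<in>?S. - ((\<lambda>_. a t) * bd_gen p t))"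
    by (rule sum.cong) (auto simp: fun_eq_iff)
  also have "\<dots> = - bd_lb p 2 a"
    by (simp add: sum_negf bd_eq[OF f])
  finally show ?thesis .
qed

lemma bd_gen_lb: "bd_lb p 2 (gen t) = bd_gen p t"
proof -
  have "bd_lb p 2 (gen t) = (\<Sum>t'\<in>{t}. (\<lambda>_. gen t t') * bd_gen p t')"
    by (rule bd_eq) (auto simp: gen_def)
  also have "\<dots> = bd_gen p t" by (simp add: gen_def one_fun_def[symmetric])
  finally show ?thesis .
qed

lemma bd_sum: "finite A \<Longrightarrow> (\<And>x. x \<in> A \<Longrightarrow> fs (f x)) \<Longrightarrow>
   bd_lb p 2 (sum f A) = (\<Sum>x\<in>A. bd_lb p 2 (f x))"
proof (induction A rule: finite_induct)
  case empty then show ?case by (simp add: bd_lb_def)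
next
  case (insert x F)
  have "bd_lb p 2 (sum f (insert x F)) = bd_lb p 2 (f x + sum f F)"
    using sum.insert[OF insert.hyps, of f] by (rule arg_cong)
  also have "\<dots> = bd_lb p 2 (f x) + bd_lb p 2 (sum f F)"
    by (rule bd_add) (use insert fs_sum in auto)
  moreover have "bd_lb p 2 (sum f F) = (\<Sum>x\<in>F. bd_lb p 2 (f x))"
    using insert.IH insert.prems by auto
  ultimately show ?case using sum.insert[OF insert.hyps, of "\<lambda>x. bd_lb p 2 (f x)"] by simp
qed

lemma bd_gen2: "bd_gen p [x,y] = gen [x] - gen [ustar p x y] - gen [y] + gen [ostar p y x]"
proof -
  have l: "{..<length [x,y]} = {0, 1::nat}" by auto
  show ?thesis unfolding bd_gen_def l
    by (simp add: del_at_def face_at_def algebra_simps)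
qed

section \<open>Regions\<close>

lemma cyc_back:
  assumes inj: "inj_on f A" and it: "\<And>n. (f^^n) x \<in> A"
  shows "i < j \<Longrightarrow> (f^^i) x = (f^^j) x \<Longrightarrow> (f^^(j-i)) x = x"
proof (induction i arbitrary: j)
  case 0 then show ?case by simp
next
  case (Suc i)
  then obtain j' where j: "j = Suc j'" by (cases j) auto
  have "f ((f^^i) x) = f ((f^^j') x)" using Suc.prems(2) j by simp
  then have e: "(f^^i) x = (f^^j') x" using inj_onD[OF inj _ it it] by blast
  have "i < j'" using Suc.prems(1) j by simp
  then have "(f^^(j'-i)) x = x" using Suc.IH e by blast
  then show ?case using j by simp
qed

lemma cyc:
  assumes "finite A" "\<And>y. y\<in>A \<Longrightarrow> f y \<in> A" "inj_on f A" "x \<in> A"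
  shows "\<exists>m. (f^^Suc m) x = x"
proof -
  have it: "\<And>n. (f^^n) x \<in> A"
  proof -
    fix n show "(f^^n) x \<in> A" by (induction n) (use assms in auto)
  qed
  have "\<not> inj (\<lambda>n. (f^^n) x)"
  proof
    assume i: "inj (\<lambda>n. (f^^n) x)"
    have "range (\<lambda>n. (f^^n) x) \<subseteq> A" using it by blast
    then have "finite (range (\<lambda>n. (f^^n) x))" using assms(1) finite_subset by blast
    then have "finite (UNIV :: nat set)" using finite_imageD[OF _ i] by blast
    then show False by simp
  qed
  then obtain i j where ij: "i \<noteq> j" "(f^^i) x = (f^^j) x" unfolding inj_def by blast
  have "\<exists>i j. i < j \<and> (f^^i) x = (f^^j) x"
  proof (cases "i < j")
    case True then show ?thesis using ij by blast
  next
    case False then have "j < i" using ij(1) by simp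
    then show ?thesis using ij(2) by (intro exI[of _ j] exI[of _ i]) simp
  qed
  then obtain i j where ij2: "i < j" "(f^^i) x = (f^^j) x" by blast
  have e: "(f^^(j-i)) x = x" by (rule cyc_back[OF assms(3) it ij2])
  have "j - i = Suc (j - i - 1)" using ij2(1) by simp
  then have "(f^^Suc (j - i - 1)) x = x" using e by simp
  then show ?thesis by blast
qed

lemma reg_fp:
  assumes kd: "knot_diagram V \<alpha>" and x: "x \<in> darts V"
  shows "region_of \<alpha> (face_perm \<alpha> x) = region_of \<alpha> x"
proof -
  let ?f = "face_perm \<alpha>"
  have fin: "finite (darts V)" using kd by (simp add: knot_diagram_def darts_def)
  have al: "\<And>d. d\<in>darts V \<Longrightarrow> \<alpha> d \<in> darts V \<and> \<alpha> d \<noteq> d \<and> \<alpha> (\<alpha> d) = d"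
    using kd by (simp add: knot_diagram_def)
  have rotd: "\<And>d. d \<in> darts V \<Longrightarrow> rot d \<in> darts V" by (auto simp: darts_def rot_def)
  have maps: "\<And>y. y\<in>darts V \<Longrightarrow> ?f y \<in> darts V" using al rotd by (simp add: face_perm_def)
  have inj: "inj_on ?f (darts V)"
  proof (rule inj_onI)
    fix y z assume y: "y \<in> darts V" and z: "z \<in> darts V" and e: "?f y = ?f z"
    then have "\<alpha> (\<alpha> (rot y)) = \<alpha> (\<alpha> (rot z))" by (simp add: face_perm_def)
    moreover have "\<alpha> (\<alpha> (rot y)) = rot y" using al[OF rotd[OF y]] by blast
    moreover have "\<alpha> (\<alpha> (rot z)) = rot z" using al[OF rotd[OF z]] by blast
    ultimately have r: "rot y = rot z" by simp
    obtain c k where yc: "y = (c,k)" "k < 4" using y by (auto simp: darts_def)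
    obtain c' k' where zc: "z = (c',k')" "k' < 4" using z by (auto simp: darts_def)
    have "c = c'" "(k+1) mod 4 = (k'+1) mod 4" using r yc zc by (auto simp: rot_def)
    moreover have "k = k'" using \<open>(k+1) mod 4 = (k'+1) mod 4\<close> yc(2) zc(2) by presburger
    ultimately show "y = z" using yc zc by simp
  qed
  obtain m where m: "(?f^^Suc m) x = x" using cyc[OF fin maps inj x] by blast
  show ?thesis
  proof
    show "region_of \<alpha> (?f x) \<subseteq> region_of \<alpha> x"
    proof
      fix y assume "y \<in> region_of \<alpha> (?f x)"
      then obtain n where y: "y = (?f^^n) (?f x)" unfolding region_of_def by blast
      then have "y = (?f^^Suc n) x" by (simp add: funpow_swap1)
      then show "y \<in> region_of \<alpha> x" unfolding region_of_def by blast
    qed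
    show "region_of \<alpha> x \<subseteq> region_of \<alpha> (?f x)"
    proof
      fix y assume "y \<in> region_of \<alpha> x"
      then obtain n where y: "y = (?f^^n) x" unfolding region_of_def by blast
      have "(?f^^(n+m)) (?f x) = (?f^^n) ((?f^^m) (?f x))" by (simp add: funpow_add)
      also have "(?f^^m) (?f x) = x" using m by (simp add: funpow_swap1)
      finally have "y = (?f^^(n+m)) (?f x)" using y by simp
      then show "y \<in> region_of \<alpha> (?f x)" unfolding region_of_def by blast
    qed
  qed
qed

section \<open>Local computation\<close>

lemma tern_lem: "(A + B) mod p = (Dd + E) mod p \<Longrightarrow> 0 \<le> E \<Longrightarrow> E < p \<Longrightarrow> (A + B - Dd) mod (p::int) = E"
  by (metis add_diff_cancel_left' mod_diff_left_eq mod_pos_pos_trivial)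

lemma pairD2: "0 \<le> x \<Longrightarrow> x < p \<Longrightarrow> 0 \<le> y \<Longrightarrow> y < p \<Longrightarrow> 0 \<le> u \<Longrightarrow> u < p \<Longrightarrow> 0 \<le> v \<Longrightarrow> v < p \<Longrightarrow>
  (gen [(x,y)] + gen [(y,x)]) + (gen [(u,v)] + gen [(v,u)]) \<in> D_SLB p 1"
  unfolding D_SLB_def by (rule zspan_plus; rule pairD[unfolded D_SLB_def]; assumption)

lemma local_all:
  fixes a0 a1 a2 a3 p :: int
  assumes r: "0 \<le> a0" "a0 < p" "0 \<le> a1" "a1 < p" "0 \<le> a2" "a2 < p" "0 \<le> a3" "a3 < p"
    and dh: "(a0 + a1) mod p = (a3 + a2) mod p"
  defines "G \<equiv> gen [(a3,a0)] + gen [(a0,a1)] + gen [(a1,a2)] + gen [(a2,a3)]"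
  shows "bd_gen p [(a0,a3),(a0,a1)] + G \<in> D_SLB p 1"
    and "- bd_gen p [(a1,a2),(a1,a0)] + G \<in> D_SLB p 1"
    and "bd_gen p [(a2,a1),(a2,a3)] + G \<in> D_SLB p 1"
    and "- bd_gen p [(a3,a0),(a3,a2)] + G \<in> D_SLB p 1"
proof -
  note Q = pairD2[of _ p]
  have t0: "tern p a0 a3 a1 = a2" unfolding tern_def
    using tern_lem[OF dh r(5,6)] by (simp add: algebra_simps)
  have t1: "tern p a1 a2 a0 = a3" unfolding tern_def
    using tern_lem[of a0 a1 p a2 a3] dh r(7,8) by (simp add: algebra_simps)
  have t2: "tern p a2 a1 a3 = a0" unfolding tern_def
    using tern_lem[of a3 a2 p a1 a0] dh r(1,2) by (simp add: algebra_simps)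
  have t3: "tern p a3 a0 a2 = a1" unfolding tern_def
    using tern_lem[of a3 a2 p a0 a1] dh r(3,4) by (simp add: algebra_simps)
  show "bd_gen p [(a0,a3),(a0,a1)] + G \<in> D_SLB p 1"
  proof -
    have "bd_gen p [(a0,a3),(a0,a1)] + G = (gen [(a0,a3)] + gen [(a3,a0)]) + (gen [(a3,a2)] + gen [(a2,a3)])"
      unfolding bd_gen2 G_def ustar_def ostar_def using t0 by (simp add: algebra_simps)
    then show ?thesis using r by (simp only:) (rule Q; assumption)
  qed
  show "- bd_gen p [(a1,a2),(a1,a0)] + G \<in> D_SLB p 1"
  proof -
    have "- bd_gen p [(a1,a2),(a1,a0)] + G = (gen [(a0,a3)] + gen [(a3,a0)]) + (gen [(a1,a0)] + gen [(a0,a1)])"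
      unfolding bd_gen2 G_def ustar_def ostar_def using t1 by (simp add: algebra_simps)
    then show ?thesis using r by (simp only:) (rule Q; assumption)
  qed
  show "bd_gen p [(a2,a1),(a2,a3)] + G \<in> D_SLB p 1"
  proof -
    have "bd_gen p [(a2,a1),(a2,a3)] + G = (gen [(a2,a1)] + gen [(a1,a2)]) + (gen [(a1,a0)] + gen [(a0,a1)])"
      unfolding bd_gen2 G_def ustar_def ostar_def using t2 by (simp add: algebra_simps)
    then show ?thesis using r by (simp only:) (rule Q; assumption)
  qed
  show "- bd_gen p [(a3,a0),(a3,a2)] + G \<in> D_SLB p 1"
  proof -
    have "- bd_gen p [(a3,a0),(a3,a2)] + G = (gen [(a2,a1)] + gen [(a1,a2)]) + (gen [(a3,a2)] + gen [(a2,a3)])"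
      unfolding bd_gen2 G_def ustar_def ostar_def using t3 by (simp add: algebra_simps)
    then show ?thesis using r by (simp only:) (rule Q; assumption)
  qed
qed

theorem lemma4p2:
  fixes p :: int and V :: "'v set" and \<alpha> :: "'v \<times> nat \<Rightarrow> 'v \<times> nat"
    and C :: "('v \<times> nat) set \<Rightarrow> int" and sel :: "'v \<Rightarrow> nat"
  assumes "prime p" and "odd p"
    and "knot_diagram V \<alpha>"
    and "dehn_coloring p V \<alpha> C"
    and "\<forall>c\<in>V. sel c < 4"
  shows "bd_lb p 2 (W V \<alpha> C sel) \<in> D_SLB p 1"
proof -
  note kd = assms(3) and dc = assms(4) and sl = assms(5)
  let ?D = "D_SLB p 1"
  let ?cc = "corner_col \<alpha> C"
  define g where "g d = gen [(?cc (fst d) (snd d + 3), ?cc (fst d) (snd d))]" for d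
  have finV: "finite V" using kd by (simp add: knot_diagram_def)
  have al: "\<And>d. d\<in>darts V \<Longrightarrow> \<alpha> d \<in> darts V \<and> \<alpha> d \<noteq> d \<and> \<alpha> (\<alpha> d) = d"
    using kd by (simp add: knot_diagram_def)
  have colr: "\<And>c k. c \<in> V \<Longrightarrow> 0 \<le> ?cc c k \<and> ?cc c k < p"
  proof -
    fix c k assume c: "c \<in> V"
    have "(c, k mod 4) \<in> darts V" using c by (simp add: darts_def)
    then have "region_of \<alpha> (c, k mod 4) \<in> regions V \<alpha>" by (simp add: regions_def)
    then show "0 \<le> ?cc c k \<and> ?cc c k < p" using dc by (simp add: dehn_coloring_def corner_col_def)
  qed
  have dehn: "\<And>c. c \<in> V \<Longrightarrow> (?cc c 0 + ?cc c 1) mod p = (?cc c 3 + ?cc c 2) mod p"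
    using dc by (simp add: dehn_coloring_def)
  have cc4: "\<And>c. ?cc c 4 = ?cc c 0" and cc5: "\<And>c. ?cc c 5 = ?cc c 1" and cc6: "\<And>c. ?cc c 6 = ?cc c 2"
    by (simp_all add: corner_col_def)
  have fscw: "\<And>c. fs (crossing_weight \<alpha> C c (sel c))"
    by (simp add: crossing_weight_def Let_def fs_gen fs_neg)
  have loc: "\<And>c. c \<in> V \<Longrightarrow> bd_lb p 2 (crossing_weight \<alpha> C c (sel c)) + (\<Sum>j\<in>{0..<4}. g (c,j)) \<in> ?D"
  proof -
    fix c assume c: "c \<in> V"
    have r: "0 \<le> ?cc c 0" "?cc c 0 < p" "0 \<le> ?cc c 1" "?cc c 1 < p"
            "0 \<le> ?cc c 2" "?cc c 2 < p" "0 \<le> ?cc c 3" "?cc c 3 < p" using colr[OF c] by auto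
    have s4: "{0..<4::nat} = {0,1,2,3}" by auto
    have Gs: "(\<Sum>j\<in>{0..<4}. g (c,j)) = gen [(?cc c 3, ?cc c 0)] + gen [(?cc c 0, ?cc c 1)] + gen [(?cc c 1, ?cc c 2)] + gen [(?cc c 2, ?cc c 3)]"
      unfolding s4 by (simp add: g_def cc4 cc5 cc6 algebra_simps)
    note L = local_all[OF r dehn[OF c]]
    have "sel c < 4" using sl c by blast
    then have "sel c = 0 \<or> sel c = 1 \<or> sel c = 2 \<or> sel c = 3" by auto
    then show "bd_lb p 2 (crossing_weight \<alpha> C c (sel c)) + (\<Sum>j\<in>{0..<4}. g (c,j)) \<in> ?D"
    proof (elim disjE)
      assume k: "sel c = 0"
      have "crossing_weight \<alpha> C c (sel c) = gen [(?cc c 0, ?cc c 3), (?cc c 0, ?cc c 1)]"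
        by (simp add: k crossing_weight_def Let_def)
      then show ?thesis using L(1) by (simp only: Gs bd_gen_lb)
    next
      assume k: "sel c = 1"
      have "crossing_weight \<alpha> C c (sel c) = - gen [(?cc c 1, ?cc c 2), (?cc c 1, ?cc c 0)]"
        by (simp add: k crossing_weight_def Let_def cc4 numeral_2_eq_2)
      then show ?thesis using L(2) by (simp only: Gs bd_gen_lb bd_neg fs_gen)
    next
      assume k: "sel c = 2"
      have "crossing_weight \<alpha> C c (sel c) = gen [(?cc c 2, ?cc c 1), (?cc c 2, ?cc c 3)]"
        by (simp add: k crossing_weight_def Let_def cc5)
      then show ?thesis using L(3) by (simp only: Gs bd_gen_lb)
    next
      assume k: "sel c = 3"
      have "crossing_weight \<alpha> C c (sel c) = - gen [(?cc c 3, ?cc c 0), (?cc c 3, ?cc c 2)]"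
        by (simp add: k crossing_weight_def Let_def cc4 cc6)
      then show ?thesis using L(4) by (simp only: Gs bd_gen_lb bd_neg fs_gen)
    qed
  qed
  have bdW: "bd_lb p 2 (W V \<alpha> C sel) = (\<Sum>c\<in>V. bd_lb p 2 (crossing_weight \<alpha> C c (sel c)))"
    unfolding W_def by (rule bd_sum[OF finV fscw])
  have dsum: "(\<Sum>c\<in>V. \<Sum>j\<in>{0..<4}. g (c,j)) = sum g (darts V)"
    unfolding darts_def by (simp only: sum.cartesian_product case_prod_eta)
  have pairs: "sum g (darts V) \<in> ?D"
    unfolding D_SLB_def
  proof (rule pair_sum[where \<sigma> = \<alpha>])
    show "finite (darts V)" using finV by (simp add: darts_def)
    show "\<forall>d\<in>darts V. \<alpha> d \<in> darts V \<and> \<alpha> d \<noteq> d \<and> \<alpha> (\<alpha> d) = d" using al by blast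
    show "\<forall>d\<in>darts V. g d + g (\<alpha> d) \<in> zspan (D_gens p 1 \<union> Drho_gens p 1)"
    proof
      fix d assume d: "d \<in> darts V"
      obtain c j where dc': "d = (c,j)" "c \<in> V" "j < 4" using d by (auto simp: darts_def)
      have ad: "\<alpha> d \<in> darts V" "\<alpha> (\<alpha> d) = d" using al[OF d] by auto
      obtain c' j' where ac: "\<alpha> d = (c',j')" "c' \<in> V" "j' < 4" using ad(1) by (auto simp: darts_def)
      have f1: "face_perm \<alpha> (c', (j'+3) mod 4) = d"
      proof -
        have "((j'+3) mod 4 + 1) mod 4 = j'" using ac(3) by presburger
        then show ?thesis using ad(2) ac(1) by (simp add: face_perm_def rot_def)
      qed
      have f2: "face_perm \<alpha> (c, (j+3) mod 4) = \<alpha> d"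
      proof -
        have "((j+3) mod 4 + 1) mod 4 = j" using dc'(3) by presburger
        then show ?thesis using dc'(1) by (simp add: face_perm_def rot_def)
      qed
      have m1: "(c', (j'+3) mod 4) \<in> darts V" using ac(2) by (simp add: darts_def)
      have m2: "(c, (j+3) mod 4) \<in> darts V" using dc'(2) by (simp add: darts_def)
      have e1: "?cc c' (j'+3) = ?cc c j"
        using reg_fp[OF kd m1] f1 dc'(1,3) by (simp add: corner_col_def)
      have e2: "?cc c (j+3) = ?cc c' j'"
        using reg_fp[OF kd m2] f2 ac(1,3) by (simp add: corner_col_def)
      have "g d + g (\<alpha> d) = gen [(?cc c (j+3), ?cc c j)] + gen [(?cc c j, ?cc c (j+3))]"
        using dc'(1) ac(1) e1 e2 by (simp add: g_def)
      moreover have "\<dots> \<in> ?D" using colr[OF dc'(2)] by (intro pairD) auto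
      ultimately show "g d + g (\<alpha> d) \<in> zspan (D_gens p 1 \<union> Drho_gens p 1)"
        by (simp only: D_SLB_def)
    qed
  qed
  have h1: "(\<Sum>c\<in>V. bd_lb p 2 (crossing_weight \<alpha> C c (sel c))) =
        (\<Sum>c\<in>V. bd_lb p 2 (crossing_weight \<alpha> C c (sel c)) + (\<Sum>j\<in>{0..<4}. g (c,j)))
        - (\<Sum>c\<in>V. \<Sum>j\<in>{0..<4}. g (c,j))"
    by (simp only: sum.distrib add_diff_cancel)
  have h2: "(\<Sum>c\<in>V. bd_lb p 2 (crossing_weight \<alpha> C c (sel c)) + (\<Sum>j\<in>{0..<4}. g (c,j)))
      \<in> zspan (D_gens p 1 \<union> Drho_gens p 1)"
    by (rule zspan_sum[OF finV]) (rule loc[unfolded D_SLB_def])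
  have h3: "(\<Sum>c\<in>V. \<Sum>j\<in>{0..<4}. g (c,j)) \<in> zspan (D_gens p 1 \<union> Drho_gens p 1)"
    unfolding dsum using pairs unfolding D_SLB_def .
  have "(\<Sum>c\<in>V. bd_lb p 2 (crossing_weight \<alpha> C c (sel c)) + (\<Sum>j\<in>{0..<4}. g (c,j)))
        - (\<Sum>c\<in>V. \<Sum>j\<in>{0..<4}. g (c,j)) \<in> zspan (D_gens p 1 \<union> Drho_gens p 1)"
    by (rule zspan_diff[OF h2 h3])
  then show ?thesis unfolding bdW D_SLB_def h1[symmetric] .
qed

end
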